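(* Let $a$ be a positive integer and let $k(a)$ be the least positive integer such that every Abelian group of order $k(a)$ is isomorphic to some product $\mathcal{G}_1\times\cdots\times\mathcal{G}_a$ of Abelian groups with $|\mathcal{G}_i|\geq 4$ for $i=1,\ldots,a$. If $G$ is a finite simple graph of arboricity at most $a$ containing no isolated edges, then ${\chi^\Sigma_g}^\star(G)\leq k(a)$.
   Context: The arboricity of $G$ is the least number of forests into which $E(G)$ can be decomposed; an isolated edge is a connected component isomorphic to $K_2$. For an Abelian group $\mathcal{G}$ with identity $0$ and $f\colon E(G)\to\mathcal{G}$, $w_f(v)=\sum_{u\in N(v)}f(uv)$. ${\chi^\Sigma_g}^\star(G)$ is the least positive integer $k$ such that for every Abelian group $\mathcal{G}$ of order $k$ there exists $f\colon E(G)\to\mathcal{G}\setminus\{0\}$ with $w_f(u)\neq w_f(v)$ for every edge $uv$. *)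

theory Defs
  imports "HOL-Algebra.Product_Groups" "HOL-Algebra.FiniteProduct"
begin

definition simple_graph :: "'v set \<Rightarrow> 'v set set \<Rightarrow> bool" where
  "simple_graph V E \<longleftrightarrow> finite V \<and>
     (\<forall>e\<in>E. \<exists>u v. u \<in> V \<and> v \<in> V \<and> u \<noteq> v \<and> e = {u, v})"

definition nbrs :: "'v set set \<Rightarrow> 'v \<Rightarrow> 'v set" where
  "nbrs E v = {u. {u, v} \<in> E}"

definition is_cycle :: "'v set set \<Rightarrow> 'v list \<Rightarrow> bool" where
  "is_cycle F vs \<longleftrightarrow> length vs \<ge> 3 \<and> distinct vs \<and>
     (\<forall>i < length vs. {vs ! i, vs ! ((i + 1) mod length vs)} \<in> F)"

definition forest_edges :: "'v set set \<Rightarrow> bool" where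
  "forest_edges F \<longleftrightarrow> \<not> (\<exists>vs. is_cycle F vs)"

definition arboricity :: "'v set set \<Rightarrow> nat" where
  "arboricity E = (LEAST n. \<exists>c :: 'v set \<Rightarrow> nat.
      (\<forall>e\<in>E. c e < n) \<and> (\<forall>i<n. forest_edges {e \<in> E. c e = i}))"

definition has_isolated_edge :: "'v set set \<Rightarrow> bool" where
  "has_isolated_edge E \<longleftrightarrow>
     (\<exists>u v. {u, v} \<in> E \<and> nbrs E u = {v} \<and> nbrs E v = {u})"

(* w_f(v) written multiplicatively in HOL-Algebra: identity = one G *)
definition weight :: "('g, 'c) monoid_scheme \<Rightarrow> 'v set set \<Rightarrow> ('v set \<Rightarrow> 'g) \<Rightarrow> 'v \<Rightarrow> 'g" where
  "weight G E f v = finprod G (\<lambda>u. f {u, v}) (nbrs E v)"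

definition good_labelling :: "('g, 'c) monoid_scheme \<Rightarrow> 'v set set \<Rightarrow> ('v set \<Rightarrow> 'g) \<Rightarrow> bool" where
  "good_labelling G E f \<longleftrightarrow>
     (\<forall>e\<in>E. f e \<in> carrier G - {\<one>\<^bsub>G\<^esub>}) \<and>
     (\<forall>u v. {u, v} \<in> E \<longrightarrow> weight G E f u \<noteq> weight G E f v)"

(* every Abelian group of order k (up to isomorphism, represented with carrier in nat) *)
definition group_sum_prop :: "'v set set \<Rightarrow> nat \<Rightarrow> bool" where
  "group_sum_prop E k \<longleftrightarrow>
     (\<forall>G :: nat monoid. comm_group G \<and> finite (carrier G) \<and> card (carrier G) = k
        \<longrightarrow> (\<exists>f. good_labelling G E f))"

definition chi_sigma_g_star :: "'v set set \<Rightarrow> nat" where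
  "chi_sigma_g_star E = (LEAST k. 0 < k \<and> group_sum_prop E k)"

definition decomposable_order :: "nat \<Rightarrow> nat \<Rightarrow> bool" where
  "decomposable_order a k \<longleftrightarrow>
     (\<forall>G :: nat monoid. comm_group G \<and> finite (carrier G) \<and> card (carrier G) = k
        \<longrightarrow> (\<exists>Gs :: nat \<Rightarrow> nat monoid.
               (\<forall>i<a. comm_group (Gs i) \<and> card (carrier (Gs i)) \<ge> 4) \<and>
               G \<cong> product_group {..<a} Gs))"

definition k_of :: "nat \<Rightarrow> nat" where
  "k_of a = (LEAST k. 0 < k \<and> decomposable_order a k)"

end

theory Submission
  imports Defs "HOL-Algebra.Sylow" "HOL-Algebra.Multiplicative_Group"
begin

definition twosets :: "'v set set \<Rightarrow> bool" where
  "twosets H \<longleftrightarrow> (\<forall>e\<in>H. \<exists>u v. u \<noteq> v \<and> e = {u, v})"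

lemma twosets_noloop: "twosets H \<Longrightarrow> {x, y} \<in> H \<Longrightarrow> x \<noteq> y"
  unfolding twosets_def by (metis doubleton_eq_iff insert_absorb2)

lemma twosets_subset: "twosets H \<Longrightarrow> H' \<subseteq> H \<Longrightarrow> twosets H'"
  unfolding twosets_def by blast

lemma nbrs_sym: "u \<in> nbrs H v \<longleftrightarrow> v \<in> nbrs H u"
  unfolding nbrs_def by (simp add: insert_commute)

lemma cycle_two_nbrs:
  assumes "is_cycle F vs" "i < length vs"
  shows "\<exists>y z. y \<noteq> z \<and> y \<in> set vs \<and> z \<in> set vs \<and> {vs ! i, y} \<in> F \<and> {vs ! i, z} \<in> F"
proof -
  let ?n = "length vs"
  have n3: "?n \<ge> 3" and d: "distinct vs" and e: "\<And>j. j < ?n \<Longrightarrow> {vs ! j, vs ! ((j + 1) mod ?n)} \<in> F"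
    using assms(1) unfolding is_cycle_def by auto
  have n0: "?n > 0" using n3 by linarith
  define j where "j = (if i = 0 then ?n - 1 else i - 1)"
  have jl: "j < ?n" using n0 assms(2) unfolding j_def by (cases "i = 0") auto
  have j1: "(j + 1) mod ?n = i"
    using n0 assms(2) unfolding j_def by auto
  have if1: "(i + 1) mod ?n = (if i + 1 = ?n then 0 else i + 1)"
    using assms(2) by auto
  have i1l: "(i + 1) mod ?n < ?n" using n0 by simp
  have ne: "(i + 1) mod ?n \<noteq> j"
    unfolding j_def if1 using n3 assms(2) by auto
  have "vs ! ((i + 1) mod ?n) \<noteq> vs ! j"
    using d ne i1l jl by (simp add: nth_eq_iff_index_eq)
  moreover have "{vs ! i, vs ! ((i + 1) mod ?n)} \<in> F" using e assms(2) by blast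
  moreover have "{vs ! i, vs ! j} \<in> F" using e[OF jl] j1 by (simp add: insert_commute)
  ultimately show ?thesis using i1l jl by (meson nth_mem)
qed

lemma cycle_vertex_two_nbrs:
  assumes "is_cycle F vs" "x \<in> set vs"
  shows "\<exists>y z. y \<noteq> z \<and> y \<in> set vs \<and> z \<in> set vs \<and> y \<in> nbrs F x \<and> z \<in> nbrs F x"
proof -
  obtain i where i: "i < length vs" "vs ! i = x" using assms(2) by (auto simp: in_set_conv_nth)
  from cycle_two_nbrs[OF assms(1) i(1)] i(2) obtain y z where
    "y \<noteq> z" "y \<in> set vs" "z \<in> set vs" "{x, y} \<in> F" "{x, z} \<in> F" by blast
  moreover have "{y, x} \<in> F" "{z, x} \<in> F" using \<open>{x, y} \<in> F\<close> \<open>{x, z} \<in> F\<close>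
    by (metis insert_commute)+
  ultimately show ?thesis unfolding nbrs_def by blast
qed

lemma forest_mono: "forest_edges F \<Longrightarrow> F' \<subseteq> F \<Longrightarrow> forest_edges F'"
  unfolding forest_edges_def is_cycle_def by blast

lemma add_edge_forest:
  assumes F: "forest_edges F" and tw: "twosets F" and uv: "{u, v} \<in> F"
    and nu: "nbrs F u = {v}" and nv: "nbrs F v = {u}" and wv: "w \<noteq> v"
  shows "forest_edges (insert {w, u} F)"
proof -
  let ?F = "insert {w, u} F"
  have uv': "u \<noteq> v" using twosets_noloop[OF tw uv] .
  have nv': "nbrs ?F v = {u}"
  proof -
    have "{x, v} \<noteq> {w, u}" for x using wv uv' by (auto simp: doubleton_eq_iff)
    then show ?thesis using nv unfolding nbrs_def by auto
  qed
  have nu': "nbrs ?F u \<subseteq> {v, w}"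
  proof
    fix x assume "x \<in> nbrs ?F u"
    then have "{x, u} = {w, u} \<or> x \<in> nbrs F u" unfolding nbrs_def by auto
    then show "x \<in> {v, w}" using nu by (auto simp: doubleton_eq_iff)
  qed
  show ?thesis unfolding forest_edges_def
  proof
    assume "\<exists>vs. is_cycle ?F vs"
    then obtain vs where c: "is_cycle ?F vs" by blast
    have "v \<notin> set vs"
    proof
      assume "v \<in> set vs"
      from cycle_vertex_two_nbrs[OF c this] nv' show False by auto
    qed
    have "u \<notin> set vs"
    proof
      assume "u \<in> set vs"
      from cycle_vertex_two_nbrs[OF c this] nu' \<open>v \<notin> set vs\<close> show False by auto
    qed
    have "{vs ! i, vs ! ((i + 1) mod length vs)} \<in> F" if "i < length vs" for i
    proof -
      have "{vs ! i, vs ! ((i + 1) mod length vs)} \<in> ?F"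
        using c that unfolding is_cycle_def by blast
      moreover have "vs ! i \<in> set vs" using that by simp
      then have "vs ! i \<noteq> u" using \<open>u \<notin> set vs\<close> by blast
      moreover have "length vs > 0" using that by linarith
      then have "(i + 1) mod length vs < length vs" by simp
      then have "vs ! ((i + 1) mod length vs) \<noteq> u" using \<open>u \<notin> set vs\<close> nth_mem by metis
      ultimately show ?thesis by (auto simp: doubleton_eq_iff)
    qed
    then have "is_cycle F vs"
      using c unfolding is_cycle_def by blast
    with F show False unfolding forest_edges_def by blast
  qed
qed

lemma extend_forest:
  assumes fin: "finite E" and tw: "twosets E" and noiso: "\<not> has_isolated_edge E"
  shows "F \<subseteq> E \<Longrightarrow> forest_edges F \<Longrightarrow>
    \<exists>H. F \<subseteq> H \<and> H \<subseteq> E \<and> forest_edges H \<and> \<not> has_isolated_edge H"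
proof (induction "card (E - F)" arbitrary: F rule: less_induct)
  case less
  show ?case
  proof (cases "has_isolated_edge F")
    case False
    then show ?thesis using less.prems by blast
  next
    case True
    then obtain u v where uv: "{u, v} \<in> F" and nu: "nbrs F u = {v}" and nv: "nbrs F v = {u}"
      unfolding has_isolated_edge_def by blast
    have twF: "twosets F" using twosets_subset[OF tw less.prems(1)] .
    have uvE: "{u, v} \<in> E" using uv less.prems(1) by blast
    have disj: "nbrs E u \<noteq> {v} \<or> nbrs E v \<noteq> {u}"
      using noiso uvE unfolding has_isolated_edge_def by blast
    obtain x y w where xy: "{x, y} \<in> F" "nbrs F x = {y}" "nbrs F y = {x}"
        and wE: "{w, x} \<in> E" and wy: "w \<noteq> y"
    proof (cases "nbrs E u \<noteq> {v}")
      case True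
      moreover have "v \<in> nbrs E u" using uvE unfolding nbrs_def by (simp add: insert_commute)
      ultimately obtain w where "w \<in> nbrs E u" "w \<noteq> v" by blast
      then show ?thesis using that[of u v w] uv nu nv unfolding nbrs_def by auto
    next
      case False
      then have "nbrs E v \<noteq> {u}" using disj by blast
      moreover have "u \<in> nbrs E v" using uvE unfolding nbrs_def by simp
      ultimately obtain w where "w \<in> nbrs E v" "w \<noteq> u" by blast
      moreover have "{v, u} \<in> F" using uv by (simp add: insert_commute)
      ultimately show ?thesis using that[of v u w] nu nv unfolding nbrs_def by auto
    qed
    let ?F = "insert {w, x} F"
    have f': "forest_edges ?F" using add_edge_forest[OF less.prems(2) twF xy wy] .
    have notin: "{w, x} \<notin> F"
    proof
      assume "{w, x} \<in> F"
      then have "w \<in> nbrs F x" unfolding nbrs_def by simp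
      with xy(2) wy show False by simp
    qed
    have sub: "?F \<subseteq> E" using less.prems(1) wE by blast
    have "E - ?F = (E - F) - {{w, x}}" by blast
    moreover have "{w, x} \<in> E - F" using wE notin by blast
    moreover have "card ((E - F) - {{w, x}}) < card (E - F)"
      by (rule card_Diff1_less) (use fin \<open>{w, x} \<in> E - F\<close> in auto)
    ultimately have "card (E - ?F) < card (E - F)" by simp
    from less.hyps[OF this sub f'] show ?thesis by blast
  qed
qed

definition is_path :: "'v set \<Rightarrow> 'v set set \<Rightarrow> 'v list \<Rightarrow> bool" where
  "is_path X H vs \<longleftrightarrow> vs \<noteq> [] \<and> distinct vs \<and> set vs \<subseteq> X \<and>
     (\<forall>i. Suc i < length vs \<longrightarrow> {vs ! i, vs ! Suc i} \<in> H)"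

lemma cycle_exists:
  assumes fin: "finite X" and ne: "x0 \<in> X" and tw: "twosets H"
    and deg: "\<And>x. x \<in> X \<Longrightarrow> \<exists>y z. y \<noteq> z \<and> y \<in> X \<and> z \<in> X \<and> {x, y} \<in> H \<and> {x, z} \<in> H"
  shows "\<exists>vs. is_cycle H vs"
proof -
  have p0: "is_path X H [x0]" using ne unfolding is_path_def by simp
  have bnd: "\<forall>vs. is_path X H vs \<longrightarrow> length vs < Suc (card X)"
  proof (intro allI impI)
    fix vs assume "is_path X H vs"
    then have "distinct vs" "set vs \<subseteq> X" unfolding is_path_def by auto
    then have "card (set vs) \<le> card X" using fin card_mono by blast
    then show "length vs < Suc (card X)" using distinct_card[OF \<open>distinct vs\<close>] by simp
  qed
  obtain vs where pv: "is_path X H vs" and mx: "\<And>ws. is_path X H ws \<Longrightarrow> length ws \<le> length vs"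
    using ex_has_greatest_nat[of "is_path X H" "[x0]" length "Suc (card X)", OF p0 bnd] by blast
  have vne: "vs \<noteq> []" and dv: "distinct vs" and sv: "set vs \<subseteq> X"
    and ev: "\<And>i. Suc i < length vs \<Longrightarrow> {vs ! i, vs ! Suc i} \<in> H"
    using pv unfolding is_path_def by auto
  have l0: "0 < length vs" using vne by simp
  have v0X: "vs ! 0 \<in> X" using sv l0 nth_mem by blast
  have inset: "t \<in> set vs" if "t \<in> X" "{vs ! 0, t} \<in> H" for t
  proof (rule ccontr)
    assume tn: "t \<notin> set vs"
    have "is_path X H (t # vs)"
      unfolding is_path_def
    proof (intro conjI allI impI)
      show "distinct (t # vs)" using tn dv by simp
      show "set (t # vs) \<subseteq> X" using sv that by simp
      fix i assume i: "Suc i < length (t # vs)"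
      show "{(t # vs) ! i, (t # vs) ! Suc i} \<in> H"
      proof (cases i)
        case 0 then show ?thesis using that(2) by (simp add: insert_commute)
      next
        case (Suc j) then show ?thesis using ev i by simp
      qed
    qed simp
    from mx[OF this] show False by simp
  qed
  obtain y z where yz: "y \<noteq> z" "y \<in> X" "z \<in> X" "{vs ! 0, y} \<in> H" "{vs ! 0, z} \<in> H"
    using deg[OF v0X] by blast
  have ys: "y \<in> set vs" and zs: "z \<in> set vs" using inset yz by auto
  obtain j where j: "j < length vs" "vs ! j = y" using ys by (auto simp: in_set_conv_nth)
  obtain k where k: "k < length vs" "vs ! k = z" using zs by (auto simp: in_set_conv_nth)
  have "j \<noteq> 0"
  proof
    assume "j = 0" then show False using twosets_noloop[OF tw yz(4)] j by simp
  qed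
  moreover have "k \<noteq> 0"
  proof
    assume "k = 0" then show False using twosets_noloop[OF tw yz(5)] k by simp
  qed
  moreover have "j \<noteq> k" using j k yz(1) by auto
  ultimately obtain m where m: "2 \<le> m" "m < length vs" "{vs ! 0, vs ! m} \<in> H"
    using j k yz by (metis One_nat_def Suc_1 Suc_leI le_neq_implies_less less_one linorder_not_le)
  let ?c = "take (Suc m) vs"
  have lc: "length ?c = Suc m" using m by simp
  have "is_cycle H ?c"
    unfolding is_cycle_def
  proof (intro conjI allI impI)
    show "3 \<le> length ?c" using lc m by simp
    show "distinct ?c" using dv by simp
    fix i assume i: "i < length ?c"
    show "{?c ! i, ?c ! ((i + 1) mod length ?c)} \<in> H"
    proof (cases "i = m")
      case True
      then have "(i + 1) mod length ?c = 0" using lc by simp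
      then show ?thesis using True m by (simp add: insert_commute)
    next
      case False
      then have "i < m" using i lc by simp
      then have "(i + 1) mod length ?c = Suc i" using lc by simp
      then show ?thesis using ev[of i] \<open>i < m\<close> m by simp
    qed
  qed
  then show ?thesis by blast
qed

lemma finite_vertices: "finite H \<Longrightarrow> twosets H \<Longrightarrow> finite (\<Union>H)"
  unfolding twosets_def by (auto intro!: finite_Union)

lemma nbrs_sub_vertices: "nbrs H x \<subseteq> \<Union>H"
  unfolding nbrs_def by auto

lemma finite_nbrs: "finite H \<Longrightarrow> twosets H \<Longrightarrow> finite (nbrs H x)"
  using finite_vertices nbrs_sub_vertices finite_subset by metis

lemma penultimate:
  assumes fin: "finite H" and tw: "twosets H" and fo: "forest_edges H"
    and ex: "y0 \<noteq> z0" "y0 \<in> nbrs H x0" "z0 \<in> nbrs H x0"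
  shows "\<exists>p q. q \<in> nbrs H p \<and> (\<exists>c. c \<in> nbrs H p \<and> c \<noteq> q) \<and> (\<forall>y\<in>nbrs H p - {q}. nbrs H y = {p})"
proof (rule ccontr)
  assume neg: "\<not> ?thesis"
  define X where "X = {x. \<exists>y z. y \<noteq> z \<and> y \<in> nbrs H x \<and> z \<in> nbrs H x}"
  have finX: "finite X"
  proof (rule finite_subset[OF _ finite_vertices[OF fin tw]])
    show "X \<subseteq> \<Union>H" unfolding X_def nbrs_def by auto
  qed
  have x0X: "x0 \<in> X" unfolding X_def using ex by blast
  have deg: "\<exists>y z. y \<noteq> z \<and> y \<in> X \<and> z \<in> X \<and> {x, y} \<in> H \<and> {x, z} \<in> H" if xX: "x \<in> X" for x
  proof -
    obtain a b where ab: "a \<noteq> b" "a \<in> nbrs H x" "b \<in> nbrs H x" using xX unfolding X_def by blast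
    have step: "\<exists>y\<in>nbrs H x - {q}. nbrs H y \<noteq> {x}" if "q \<in> nbrs H x" "c \<in> nbrs H x" "c \<noteq> q" for q c
      using neg that by blast
    obtain y1 where y1: "y1 \<in> nbrs H x" "y1 \<noteq> a" "nbrs H y1 \<noteq> {x}"
      using step[OF ab(2) ab(3)] ab by blast
    obtain y2 where y2: "y2 \<in> nbrs H x" "y2 \<noteq> y1" "nbrs H y2 \<noteq> {x}"
      using step[OF y1(1) ab(2) y1(2)[symmetric]] by blast
    have inX: "y \<in> X" if yn: "y \<in> nbrs H x" "nbrs H y \<noteq> {x}" for y
    proof -
      have "x \<in> nbrs H y" using yn(1) nbrs_sym by metis
      then obtain w where "w \<in> nbrs H y" "w \<noteq> x" using yn(2) by blast
      then show ?thesis unfolding X_def using \<open>x \<in> nbrs H y\<close> by blast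
    qed
    have "{x, y1} \<in> H" "{x, y2} \<in> H" using y1(1) y2(1) unfolding nbrs_def by (simp_all add: insert_commute)
    then show ?thesis using inX y1 y2 by blast
  qed
  from cycle_exists[OF finX x0X tw deg] fo show False unfolding forest_edges_def by blast
qed

context comm_group
begin

lemma avoid3:
  assumes "finite (carrier G)" "card (carrier G) \<ge> 4"
  shows "\<exists>w\<in>carrier G. w \<noteq> x \<and> w \<noteq> y \<and> w \<noteq> z"
proof (rule ccontr)
  assume "\<not> ?thesis"
  then have "carrier G \<subseteq> {x, y, z}" by blast
  then have "card (carrier G) \<le> card {x, y, z}" by (simp add: card_mono)
  also have "\<dots> \<le> 3" by (simp add: card_insert_if)
  finally show False using assms(2) by simp
qed

lemma local_choice:
  assumes fc: "finite (carrier G)" "card (carrier G) \<ge> 4"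
    and a: "a \<in> carrier G" "a \<noteq> \<one>" and B: "B \<in> carrier G"
    and I: "finite I" "j0 \<in> I"
  shows "\<exists>x. x \<in> I \<rightarrow> carrier G - {\<one>} \<and> a \<otimes> finprod G x I \<noteq> B \<and>
             (\<forall>j\<in>I. a \<otimes> finprod G x I \<noteq> x j)"
proof -
  define n where "n = card (I - {j0})"
  obtain u where u: "u \<in> carrier G" "u \<noteq> \<one>" using avoid3[OF fc, of \<one> \<one> \<one>] by blast
  obtain v where v: "v \<in> carrier G" "v \<noteq> \<one>" "v \<noteq> inv u" using avoid3[OF fc, of \<one> "inv u" \<one>] by blast
  have uv1: "u \<otimes> v \<noteq> \<one>"
  proof
    assume "u \<otimes> v = \<one>"
    then have "v \<otimes> u = \<one>" using u v by (simp add: m_comm)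
    then have "inv u = v" using u v inv_equality by blast
    with v show False by simp
  qed
  have "\<exists>g\<in>carrier G. g \<noteq> \<one> \<and> a \<otimes> g [^] n \<noteq> \<one>"
  proof (rule ccontr)
    assume "\<not> ?thesis"
    then have hA: "\<And>g. g \<in> carrier G \<Longrightarrow> g \<noteq> \<one> \<Longrightarrow> a \<otimes> g [^] n = \<one>" by blast
    have h1: "a \<otimes> u [^] n = \<one>" using hA u by blast
    have h2: "a \<otimes> v [^] n = \<one>" using hA v by blast
    have h3: "a \<otimes> (u \<otimes> v) [^] n = \<one>" using hA u v uv1 by simp
    have "(u \<otimes> v) [^] n = u [^] n \<otimes> v [^] n" using u v by (intro pow_mult_distrib m_comm)
    then have "(a \<otimes> u [^] n) \<otimes> v [^] n = \<one>" using h3 u v a by (simp add: m_assoc)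
    then have "v [^] n = \<one>" using h1 v by simp
    then have "a = \<one>" using h2 a by simp
    with a show False by simp
  qed
  then obtain g where g: "g \<in> carrier G" "g \<noteq> \<one>" "a \<otimes> g [^] n \<noteq> \<one>" by blast
  define c where "c = a \<otimes> g [^] n"
  have c: "c \<in> carrier G" "c \<noteq> \<one>" using g a unfolding c_def by auto
  obtain hh where hh: "hh \<in> carrier G" "hh \<noteq> \<one>" "hh \<noteq> inv c \<otimes> B" "hh \<noteq> inv c \<otimes> g"
    using avoid3[OF fc, of \<one> "inv c \<otimes> B" "inv c \<otimes> g"] by blast
  define x where "x = (\<lambda>j. if j = j0 then hh else g)"
  have xI: "x \<in> I \<rightarrow> carrier G - {\<one>}" using hh g unfolding x_def by auto
  have "finprod G x I = finprod G x (insert j0 (I - {j0}))" using I by (simp add: insert_absorb)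
  also have "\<dots> = x j0 \<otimes> finprod G x (I - {j0})"
    using I xI by (intro finprod_insert) auto
  also have "finprod G x (I - {j0}) = finprod G (\<lambda>_. g) (I - {j0})"
    using g by (intro finprod_cong) (auto simp: x_def)
  also have "\<dots> = g [^] n" using g by (simp add: finprod_const n_def)
  finally have P: "finprod G x I = hh \<otimes> g [^] n" by (simp add: x_def)
  have W: "a \<otimes> finprod G x I = c \<otimes> hh"
  proof -
    have "a \<otimes> (hh \<otimes> g [^] n) = a \<otimes> (g [^] n \<otimes> hh)" using g hh m_comm by simp
    also have "\<dots> = (a \<otimes> g [^] n) \<otimes> hh" using a g hh m_assoc[symmetric] by simp
    finally show ?thesis unfolding P c_def .
  qed
  have ne1: "c \<otimes> hh \<noteq> B"
  proof
    assume "c \<otimes> hh = B"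
    then have "hh = inv c \<otimes> B" using c hh B inv_solve_left[of hh c B] by blast
    with hh show False by simp
  qed
  have ne2: "c \<otimes> hh \<noteq> g"
  proof
    assume "c \<otimes> hh = g"
    then have "hh = inv c \<otimes> g" using c hh g inv_solve_left[of hh c g] by blast
    with hh show False by simp
  qed
  have ne3: "c \<otimes> hh \<noteq> hh"
  proof
    assume "c \<otimes> hh = hh"
    then have "c = \<one>" using c hh r_cancel_one[of hh c] by blast
    with c show False by simp
  qed
  have X3: "\<forall>j\<in>I. a \<otimes> finprod G x I \<noteq> x j"
  proof
    fix j assume "j \<in> I"
    show "a \<otimes> finprod G x I \<noteq> x j"
      unfolding W by (cases "j = j0") (simp_all add: x_def ne2 ne3)
  qed
  have X2: "a \<otimes> finprod G x I \<noteq> B" unfolding W by (rule ne1)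
  show ?thesis
    by (rule exI[of _ x]) (intro conjI xI X2 X3)
qed

end

context comm_group
begin

lemma weight_single:
  assumes "nbrs H c = {p}" "f {p, c} \<in> carrier G"
  shows "weight G H f c = f {p, c}"
  unfolding weight_def assms(1) using assms(2) by simp

lemma forest_label:
  assumes fc: "finite (carrier G)" "card (carrier G) \<ge> 4"
  shows "finite H \<Longrightarrow> twosets H \<Longrightarrow> forest_edges H \<Longrightarrow>
    \<exists>h. (\<forall>e\<in>H. h e \<in> carrier G - {\<one>}) \<and>
        (\<forall>u v. {u, v} \<in> H \<and> \<not> (nbrs H u = {v} \<and> nbrs H v = {u}) \<longrightarrow>
              weight G H h u \<noteq> weight G H h v)"
proof (induction "card H" arbitrary: H rule: less_induct)
  case less
  note finH = less.prems(1) and twH = less.prems(2) and foH = less.prems(3)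
  obtain g0 where g0: "g0 \<in> carrier G" "g0 \<noteq> \<one>" using avoid3[OF fc, of \<one> \<one> \<one>] by blast
  show ?case
  proof (cases "\<exists>x0 y0 z0. y0 \<noteq> z0 \<and> y0 \<in> nbrs H x0 \<and> z0 \<in> nbrs H x0")
    case False
    have "\<not> (nbrs H u = {v} \<and> nbrs H v = {u}) \<Longrightarrow> False" if "{u, v} \<in> H" for u v
    proof -
      assume a: "\<not> (nbrs H u = {v} \<and> nbrs H v = {u})"
      have "v \<in> nbrs H u" "u \<in> nbrs H v" using that unfolding nbrs_def by (simp_all add: insert_commute)
      then have "nbrs H u = {v}" "nbrs H v = {u}" using False by blast+
      with a show False by blast
    qed
    then have "\<forall>u v. {u, v} \<in> H \<and> \<not> (nbrs H u = {v} \<and> nbrs H v = {u}) \<longrightarrow>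
              weight G H (\<lambda>_. g0) u \<noteq> weight G H (\<lambda>_. g0) v" by blast
    moreover have "\<forall>e\<in>H. (\<lambda>_. g0) e \<in> carrier G - {\<one>}" using g0 by simp
    ultimately show ?thesis by (intro exI[of _ "\<lambda>_. g0"] conjI)
  next
    case True
    then obtain x0 y0 z0 where ex: "y0 \<noteq> z0" "y0 \<in> nbrs H x0" "z0 \<in> nbrs H x0" by blast
    obtain p q where q: "q \<in> nbrs H p" and c0ex: "\<exists>c. c \<in> nbrs H p \<and> c \<noteq> q"
      and leaves: "\<forall>y\<in>nbrs H p - {q}. nbrs H y = {p}"
      using penultimate[OF finH twH foH ex] by blast
    define Lv where "Lv = nbrs H p - {q}"
    obtain c0 where c0: "c0 \<in> Lv" using c0ex unfolding Lv_def by blast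
    have leaf: "\<And>c. c \<in> Lv \<Longrightarrow> nbrs H c = {p}" using leaves unfolding Lv_def by blast
    have finLv: "finite Lv" unfolding Lv_def using finite_nbrs[OF finH twH] by blast
    have qp: "{q, p} \<in> H" using q unfolding nbrs_def by simp
    have pq: "p \<noteq> q" using twosets_noloop[OF twH qp] by simp
    have qLv: "q \<notin> Lv" unfolding Lv_def by simp
    have cH: "\<And>c. c \<in> Lv \<Longrightarrow> {c, p} \<in> H" unfolding Lv_def nbrs_def by simp
    have pLv: "p \<notin> Lv"
    proof
      assume "p \<in> Lv" then have "{p, p} \<in> H" using cH by blast
      then show False using twosets_noloop[OF twH] by blast
    qed
    define H' where "H' = {e \<in> H. \<not> (\<exists>c\<in>Lv. e = {c, p})}"
    have H'sub: "H' \<subseteq> H" unfolding H'_def by blast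
    have c0p: "{c0, p} \<in> H - H'" using cH[OF c0] c0 unfolding H'_def by blast
    have cardlt: "card H' < card H"
    proof (rule psubset_card_mono[OF finH])
      show "H' \<subset> H" using H'sub c0p by blast
    qed
    have finH': "finite H'" using finH H'sub finite_subset by blast
    have twH': "twosets H'" using twosets_subset[OF twH H'sub] .
    have foH': "forest_edges H'" using forest_mono[OF foH H'sub] .
    have edge_eq: "{u, y} = {c, p} \<Longrightarrow> y = c \<or> y = p" for u y c
      by (auto simp: doubleton_eq_iff)
    have edge_eq': "{u, y} = {c, p} \<Longrightarrow> u = c \<or> u = p" for u y c
      by (auto simp: doubleton_eq_iff)
    have inH': "{u, y} \<in> H'" if "{u, y} \<in> H" "y \<notin> insert p Lv" for u y
    proof -
      have "\<not> (\<exists>c\<in>Lv. {u, y} = {c, p})" using that(2) edge_eq by blast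
      then show ?thesis using that(1) unfolding H'_def by blast
    qed
    have nbrs_same: "nbrs H' y = nbrs H y" if "y \<notin> insert p Lv" for y
      using inH'[OF _ that] H'sub unfolding nbrs_def by blast
    have qH': "{q, p} \<in> H'"
    proof -
      have "\<not> (\<exists>c\<in>Lv. {q, p} = {c, p})" using qLv pq by (auto simp: doubleton_eq_iff)
      then show ?thesis using qp unfolding H'_def by blast
    qed
    have nbrs_p: "nbrs H' p = {q}"
    proof
      show "{q} \<subseteq> nbrs H' p" using qH' unfolding nbrs_def by simp
      show "nbrs H' p \<subseteq> {q}"
      proof
        fix u assume u: "u \<in> nbrs H' p"
        then have uH: "{u, p} \<in> H'" unfolding nbrs_def by simp
        then have "u \<notin> Lv" unfolding H'_def by blast
        moreover have "u \<in> nbrs H p" using uH H'sub unfolding nbrs_def by blast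
        ultimately show "u \<in> {q}" unfolding Lv_def by blast
      qed
    qed
    have notLv: "u \<notin> Lv" if "{u, v} \<in> H'" for u v
    proof
      assume uL: "u \<in> Lv"
      have "v \<in> nbrs H u" using that H'sub unfolding nbrs_def by (auto simp: insert_commute)
      then have "v = p" using leaf[OF uL] by blast
      then show False using that uL unfolding H'_def by blast
    qed
    from less.hyps[OF cardlt finH' twH' foH'] obtain h' where
      h'c: "\<forall>e\<in>H'. h' e \<in> carrier G - {\<one>}" and
      h'w: "\<forall>u v. {u, v} \<in> H' \<and> \<not> (nbrs H' u = {v} \<and> nbrs H' v = {u}) \<longrightarrow>
              weight G H' h' u \<noteq> weight G H' h' v" by blast
    define a where "a = h' {q, p}"
    have a: "a \<in> carrier G" "a \<noteq> \<one>" using h'c qH' unfolding a_def by auto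
    define B where "B = weight G H' h' q"
    have B: "B \<in> carrier G"
    proof -
      have "(\<lambda>u. h' {u, q}) \<in> nbrs H' q \<rightarrow> carrier G"
        using h'c unfolding nbrs_def by auto
      then show ?thesis unfolding B_def weight_def by simp
    qed
    obtain x where x: "x \<in> Lv \<rightarrow> carrier G - {\<one>}" and xB: "a \<otimes> finprod G x Lv \<noteq> B"
      and xL: "\<forall>j\<in>Lv. a \<otimes> finprod G x Lv \<noteq> x j"
      using local_choice[OF fc a B finLv c0] by blast
    define h where "h = (\<lambda>e. if e \<in> H' then h' e else x (the_elem (e - {p})))"
    have h_old: "h e = h' e" if "e \<in> H'" for e using that unfolding h_def by simp
    have h_new: "h {c, p} = x c" if "c \<in> Lv" for c
    proof -
      have "{c, p} \<notin> H'" using that unfolding H'_def by blast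
      moreover have "{c, p} - {p} = {c}" using that pLv by auto
      ultimately show ?thesis unfolding h_def by simp
    qed
    have h_new': "h {p, c} = x c" if "c \<in> Lv" for c
      using h_new[OF that] by (simp add: insert_commute)
    have hcar: "\<forall>e\<in>H. h e \<in> carrier G - {\<one>}"
    proof
      fix e assume eH: "e \<in> H"
      show "h e \<in> carrier G - {\<one>}"
      proof (cases "e \<in> H'")
        case True then show ?thesis using h_old h'c by simp
      next
        case False
        then obtain c where "c \<in> Lv" "e = {c, p}" using eH unfolding H'_def by blast
        then show ?thesis using h_new x by auto
      qed
    qed
    have hfun: "(\<lambda>u. h {u, y}) \<in> nbrs H y \<rightarrow> carrier G" for y
      using hcar unfolding nbrs_def by auto
    have wc: "weight G H h c = x c" if "c \<in> Lv" for c
    proof -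
      have "h {p, c} \<in> carrier G" using h_new'[OF that] x that by auto
      then show ?thesis using weight_single[OF leaf[OF that]] h_new'[OF that] by simp
    qed
    have nbrsHp: "nbrs H p = insert q Lv" unfolding Lv_def using q by blast
    have wp: "weight G H h p = a \<otimes> finprod G x Lv"
    proof -
      have "weight G H h p = h {q, p} \<otimes> finprod G (\<lambda>u. h {u, p}) Lv"
        unfolding weight_def nbrsHp
        using finLv qLv hfun[of p] nbrsHp by (intro finprod_insert) auto
      also have "h {q, p} = a" unfolding a_def using h_old[OF qH'] .
      also have "finprod G (\<lambda>u. h {u, p}) Lv = finprod G x Lv"
        using x h_new by (intro finprod_cong) auto
      finally show ?thesis .
    qed
    have wy: "weight G H h y = weight G H' h' y" if "y \<notin> insert p Lv" for y
    proof -
      have "finprod G (\<lambda>u. h {u, y}) (nbrs H y) = finprod G (\<lambda>u. h' {u, y}) (nbrs H' y)"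
      proof (rule finprod_cong')
        show "nbrs H y = nbrs H' y" using nbrs_same[OF that] by simp
        show "(\<lambda>u. h' {u, y}) \<in> nbrs H' y \<rightarrow> carrier G" using h'c unfolding nbrs_def by auto
        fix u assume "u \<in> nbrs H' y"
        then have "{u, y} \<in> H'" unfolding nbrs_def by simp
        then show "h {u, y} = h' {u, y}" using h_old by simp
      qed
      then show ?thesis unfolding weight_def .
    qed
    have wp': "weight G H' h' p = a"
      unfolding a_def using weight_single[OF nbrs_p] h'c qH' by auto
    have wq: "weight G H h q = B" unfolding B_def using wy[of q] qLv pq by simp
    have main: "weight G H h u \<noteq> weight G H h v"
      if uvH: "{u, v} \<in> H" and niso: "\<not> (nbrs H u = {v} \<and> nbrs H v = {u})" for u v
    proof (cases "{u, v} \<in> H'")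
      case False
      then have "\<exists>c\<in>Lv. {u, v} = {c, p}" using uvH unfolding H'_def by simp
      then obtain c where c: "c \<in> Lv" "{u, v} = {c, p}" by blast
      then have "(u = c \<and> v = p) \<or> (u = p \<and> v = c)" by (auto simp: doubleton_eq_iff)
      moreover have ne: "a \<otimes> finprod G x Lv \<noteq> x c" using xL c(1) by blast
      moreover have "weight G H h c = x c" using wc[OF c(1)] .
      ultimately show ?thesis using wp by (elim disjE conjE) simp_all
    next
      case True
      have uL: "u \<notin> Lv" using notLv[OF True] .
      have vL: "v \<notin> Lv" using notLv[of v u] True by (simp add: insert_commute)
      show ?thesis
      proof (cases "u = p")
        case True
        then have "{v, p} \<in> H'" using \<open>{u, v} \<in> H'\<close> by (simp add: insert_commute)
        then have "v \<in> nbrs H' p" unfolding nbrs_def by simp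
        then have "v = q" using nbrs_p by simp
        then show ?thesis using True wp wq xB by simp
      next
        case up: False
        show ?thesis
        proof (cases "v = p")
          case True
          then have "u \<in> nbrs H' p" using \<open>{u, v} \<in> H'\<close> unfolding nbrs_def by simp
          then have "u = q" using nbrs_p by simp
          then show ?thesis using True wp wq xB by simp
        next
          case vp: False
          have nu: "nbrs H' u = nbrs H u" using nbrs_same uL up by simp
          have nv: "nbrs H' v = nbrs H v" using nbrs_same vL vp by simp
          have "weight G H' h' u \<noteq> weight G H' h' v"
          proof (rule h'w[rule_format])
            show "{u, v} \<in> H' \<and> \<not> (nbrs H' u = {v} \<and> nbrs H' v = {u})"
              using \<open>{u, v} \<in> H'\<close> niso unfolding nu nv by blast
          qed
          then show ?thesis using wy uL up vL vp by simp
        qed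
      qed
    qed
    have "\<forall>u v. {u, v} \<in> H \<and> \<not> (nbrs H u = {v} \<and> nbrs H v = {u}) \<longrightarrow>
              weight G H h u \<noteq> weight G H h v"
    proof (intro allI impI)
      fix u v assume "{u, v} \<in> H \<and> \<not> (nbrs H u = {v} \<and> nbrs H v = {u})"
      then show "weight G H h u \<noteq> weight G H h v" using main[of u v] by blast
    qed
    then show ?thesis
      by (intro exI[of _ h] conjI hcar)
  qed
qed

end

context comm_group
begin

lemma pow_finprod:
  assumes "finite A" "f \<in> A \<rightarrow> carrier G"
  shows "(finprod G f A) [^] (n::nat) = finprod G (\<lambda>j. f j [^] n) A"
  using assms
proof (induction A rule: finite_induct)
  case empty then show ?case by simp
next
  case (insert b A)
  have fb: "f b \<in> carrier G" and fA: "f \<in> A \<rightarrow> carrier G" using insert.prems by auto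
  have "finprod G f (insert b A) = f b \<otimes> finprod G f A"
    using insert fb fA by (intro finprod_insert) auto
  then have "(finprod G f (insert b A)) [^] n = f b [^] n \<otimes> (finprod G f A) [^] n"
    using fb fA by (simp add: pow_mult_distrib m_comm)
  also have "\<dots> = f b [^] n \<otimes> finprod G (\<lambda>j. f j [^] n) A" using insert.IH[OF fA] by simp
  also have "\<dots> = finprod G (\<lambda>j. f j [^] n) (insert b A)"
    using insert fb fA by (intro finprod_insert[symmetric]) auto
  finally show ?case .
qed

lemma pow_mod_eq:
  assumes "x \<in> carrier G" "x [^] (p::nat) = \<one>"
  shows "x [^] (n::nat) = x [^] (n mod p)"
proof -
  have "x [^] n = x [^] (p * (n div p) + n mod p)" by simp
  also have "\<dots> = (x [^] p) [^] (n div p) \<otimes> x [^] (n mod p)"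
    using assms(1) by (simp add: nat_pow_mult nat_pow_pow)
  also have "\<dots> = x [^] (n mod p)" using assms by simp
  finally show ?thesis .
qed

lemma decomp:
  fixes ps :: "nat \<Rightarrow> nat" and a :: nat
  assumes fin: "finite (carrier G)"
    and ps: "\<And>i. i < a \<Longrightarrow> prime (ps i) \<and> 5 \<le> ps i" and inj: "inj_on ps {..<a}"
    and cardG: "card (carrier G) = (\<Prod>i<a. ps i)"
  shows "\<exists>Gs :: nat \<Rightarrow> ('a, 'b) monoid_scheme. (\<forall>i<a. comm_group (Gs i) \<and> card (carrier (Gs i)) \<ge> 4) \<and>
             G \<cong> product_group {..<a} Gs"
proof -
  define I where "I = {..<a::nat}"
  define k where "k = (\<Prod>i<a. ps i)"
  define m where "m i = (\<Prod>j\<in>I - {i}. ps j)" for i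
  have finI: "finite I" unfolding I_def by simp
  have psI: "prime (ps i)" "5 \<le> ps i" if "i \<in> I" for i using ps that unfolding I_def by auto
  have km: "k = ps i * m i" if "i \<in> I" for i
    unfolding k_def m_def using prod.remove[OF finI that, of ps] unfolding I_def by simp
  have pdvd: "ps j dvd m i" if "j \<in> I" "j \<noteq> i" for i j
    unfolding m_def using finI that by (intro dvd_prodI) auto
  have ndvd: "\<not> ps i dvd m i" if iI: "i \<in> I" for i
  proof
    assume "ps i dvd m i"
    then obtain j where j: "j \<in> I - {i}" "ps i dvd ps j"
      unfolding m_def using prime_dvd_prod_iff[of "I - {i}" "ps i" ps] finI psI[OF iI] by auto
    then have "ps i = ps j" using primes_dvd_imp_eq psI iI by blast
    then have "i = j" using inj iI j(1) unfolding I_def inj_on_def by blast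
    with j show False by simp
  qed
  have xk: "x [^] k = \<one>" if "x \<in> carrier G" for x
    using pow_order_eq_1[OF that] cardG unfolding order_def k_def by simp
  define S where "S i = {x \<in> carrier G. x [^] ps i = \<one>}" for i
  have subS: "subgroup (S i) G" for i
  proof (rule subgroupI)
    show "S i \<subseteq> carrier G" unfolding S_def by blast
    have "\<one> \<in> S i" unfolding S_def by simp
    then show "S i \<noteq> {}" by blast
    fix x assume "x \<in> S i"
    then show "inv x \<in> S i" unfolding S_def by (simp add: nat_pow_inv)
    fix y assume "y \<in> S i"
    with \<open>x \<in> S i\<close> show "x \<otimes> y \<in> S i" unfolding S_def by (simp add: pow_mult_distrib m_comm)
  qed
  define Gs where "Gs i = G\<lparr>carrier := S i\<rparr>" for i
  have grpGs: "group (Gs i)" for i unfolding Gs_def using subgroup.subgroup_is_group[OF subS is_group] .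
  have cgGs: "comm_group (Gs i)" for i
  proof (rule group.group_comm_groupI[OF grpGs])
    fix x y assume "x \<in> carrier (Gs i)" "y \<in> carrier (Gs i)"
    then have "x \<in> carrier G" "y \<in> carrier G" unfolding Gs_def S_def by auto
    then show "x \<otimes>\<^bsub>Gs i\<^esub> y = y \<otimes>\<^bsub>Gs i\<^esub> x" unfolding Gs_def by (simp add: m_comm)
  qed
  have cardS: "card (carrier (Gs i)) \<ge> 4" if iI: "i \<in> I" for i
  proof -
    have "order G = ps i ^ 1 * m i" using cardG km[OF iI] unfolding order_def k_def by simp
    then have "\<exists>H. subgroup H G \<and> card H = ps i ^ 1"
      by (intro sylow_thm[of "ps i" G 1 "m i"] psI[OF iI] is_group fin)
    then obtain Hs where Hs: "subgroup Hs G" "card Hs = ps i" by auto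
    have gH: "group (G\<lparr>carrier := Hs\<rparr>)" using subgroup.subgroup_is_group[OF Hs(1) is_group] .
    have "Hs \<subseteq> S i"
    proof
      fix y assume yH: "y \<in> Hs"
      have "y [^]\<^bsub>G\<lparr>carrier := Hs\<rparr>\<^esub> order (G\<lparr>carrier := Hs\<rparr>) = \<one>\<^bsub>G\<lparr>carrier := Hs\<rparr>\<^esub>"
        using group.pow_order_eq_1[OF gH] yH by simp
      then have "y [^] ps i = \<one>" using Hs(2) unfolding order_def by (simp add: nat_pow_consistent[symmetric])
      moreover have "y \<in> carrier G" using yH Hs(1) subgroup.subset by blast
      ultimately show "y \<in> S i" unfolding S_def by simp
    qed
    moreover have "finite (S i)" unfolding S_def using fin by simp
    ultimately have "card Hs \<le> card (S i)" by (simp add: card_mono)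
    then show ?thesis using Hs(2) psI[OF iI] unfolding Gs_def by simp
  qed
  define P where "P = product_group I Gs"
  have grpP: "group P" unfolding P_def using grpGs by simp
  define \<phi> where "\<phi> x = (\<lambda>i\<in>I. x [^] m i)" for x
  have \<phi>car: "\<phi> x \<in> carrier P" if "x \<in> carrier G" for x
  proof -
    have "x [^] m i \<in> S i" if "i \<in> I" for i
    proof -
      have "(x [^] m i) [^] ps i = x [^] k" using \<open>x \<in> carrier G\<close> km[OF that] by (simp add: nat_pow_pow mult.commute)
      then show ?thesis unfolding S_def using xk \<open>x \<in> carrier G\<close> by simp
    qed
    then show ?thesis unfolding P_def \<phi>_def Gs_def by auto
  qed
  have hom: "\<phi> \<in> hom G P"
  proof (rule homI)
    show "\<phi> x \<in> carrier P" if "x \<in> carrier G" for x using \<phi>car[OF that] .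
    fix x y assume xy: "x \<in> carrier G" "y \<in> carrier G"
    show "\<phi> (x \<otimes> y) = \<phi> x \<otimes>\<^bsub>P\<^esub> \<phi> y"
      unfolding P_def \<phi>_def Gs_def mult_product_group using xy
      by (intro restrict_ext) (simp add: pow_mult_distrib m_comm)
  qed
  have gh: "group_hom G P \<phi>"
    using hom grpP is_group unfolding group_hom_def group_hom_axioms_def by simp
  have ker: "\<forall>x\<in>carrier G. \<phi> x = \<one>\<^bsub>P\<^esub> \<longrightarrow> x = \<one>"
  proof (intro ballI impI)
    fix x assume xG: "x \<in> carrier G" and "\<phi> x = \<one>\<^bsub>P\<^esub>"
    then have xm: "x [^] m i = \<one>" if "i \<in> I" for i
    proof -
      have "\<phi> x i = \<one>\<^bsub>P\<^esub> i" using \<open>\<phi> x = \<one>\<^bsub>P\<^esub>\<close> by simp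
      then show ?thesis using that unfolding \<phi>_def P_def Gs_def by simp
    qed
    have dk: "ord x dvd k" using xk[OF xG] pow_eq_id[OF xG] by simp
    have dm: "ord x dvd m i" if "i \<in> I" for i using xm[OF that] pow_eq_id[OF xG] by simp
    have "ord x = 1"
    proof (rule ccontr)
      assume "ord x \<noteq> 1"
      then obtain q where q: "prime q" "q dvd ord x" using prime_factor_nat by blast
      then have "q dvd k" using dk dvd_trans by blast
      then obtain j where j: "j \<in> I" "q dvd ps j"
        unfolding k_def I_def using prime_dvd_prod_iff[of "{..<a}" q ps] q(1) by auto
      then have "q = ps j" using primes_dvd_imp_eq q(1) psI by blast
      moreover have "q dvd m j" using q(2) dm[OF j(1)] dvd_trans by blast
      ultimately show False using ndvd[OF j(1)] by simp
    qed
    then show "x = \<one>" using ord_eq_1[OF xG] by simp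
  qed
  have surj: "carrier P \<subseteq> \<phi> ` carrier G"
  proof
    fix y assume yP: "y \<in> carrier P"
    then have yS: "y i \<in> S i" if "i \<in> I" for i using that unfolding P_def Gs_def by auto
    have yG: "y i \<in> carrier G" if "i \<in> I" for i using yS[OF that] unfolding S_def by simp
    have yp: "y i [^] ps i = \<one>" if "i \<in> I" for i using yS[OF that] unfolding S_def by simp
    have yext: "y i = undefined" if "i \<notin> I" for i using yP that unfolding P_def Gs_def by auto
    have uex: "\<exists>t. (m i * t) mod ps i = 1" if iI: "i \<in> I" for i
    proof -
      have mi0: "m i \<noteq> 0" using pdvd ndvd[OF iI] by (metis dvd_0_right)
      have "coprime (ps i) (m i)" using prime_imp_coprime[OF psI(1)[OF iI] ndvd[OF iI]] .
      then have g1: "gcd (m i) (ps i) = 1" by (simp add: coprime_commute coprime_iff_gcd_eq_1 gcd.commute)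
      obtain t s where "m i * t = ps i * s + gcd (m i) (ps i)" using bezout_nat[OF mi0] by blast
      then have "m i * t = ps i * s + 1" using g1 by simp
      then have "m i * t = 1 + ps i * s" by simp
      moreover have "(1 + ps i * s) mod ps i = 1 mod ps i" by (rule mod_mult_self2)
      ultimately have "(m i * t) mod ps i = 1 mod ps i" by simp
      also have "\<dots> = 1" using psI(2)[OF iI] by simp
      finally show ?thesis by blast
    qed
    define u where "u i = (SOME t. (m i * t) mod ps i = 1)" for i
    have u: "(m i * u i) mod ps i = 1" if "i \<in> I" for i
      unfolding u_def using someI_ex[OF uex[OF that]] .
    define x0 where "x0 = finprod G (\<lambda>j. y j [^] u j) I"
    have yfun: "(\<lambda>j. y j [^] u j) \<in> I \<rightarrow> carrier G" using yG by simp
    have x0G: "x0 \<in> carrier G" unfolding x0_def using yfun by simp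
    have comp: "x0 [^] m i = y i" if iI: "i \<in> I" for i
    proof -
      have "x0 [^] m i = finprod G (\<lambda>j. (y j [^] u j) [^] m i) I"
        unfolding x0_def using pow_finprod[OF finI yfun] .
      also have "\<dots> = finprod G (\<lambda>j. if j = i then y j else \<one>) I"
      proof (rule finprod_cong')
        show "(\<lambda>j. if j = i then y j else \<one>) \<in> I \<rightarrow> carrier G" using yG by simp
        fix j assume jI: "j \<in> I"
        have "(y j [^] u j) [^] m i = y j [^] (m i * u j)"
          using yG[OF jI] by (simp add: nat_pow_pow mult.commute)
        also have "\<dots> = y j [^] ((m i * u j) mod ps j)"
          by (rule pow_mod_eq[OF yG[OF jI] yp[OF jI]])
        finally have e: "(y j [^] u j) [^] m i = y j [^] ((m i * u j) mod ps j)" .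
        show "(y j [^] u j) [^] m i = (if j = i then y j else \<one>)"
        proof (cases "j = i")
          case True then show ?thesis using e u[OF iI] yG[OF iI] by simp
        next
          case False
          have "ps j dvd m i * u j" using pdvd[OF jI False] by (rule dvd_mult2)
          then have "(m i * u j) mod ps j = 0" by simp
          then show ?thesis using e False by simp
        qed
      qed simp
      also have "\<dots> = y i" using finprod_singleton_swap[OF iI finI, of y] yG by auto
      finally show ?thesis .
    qed
    have "\<phi> x0 = y"
    proof
      fix i show "\<phi> x0 i = y i"
        by (cases "i \<in> I") (simp_all add: \<phi>_def comp yext)
    qed
    then show "y \<in> \<phi> ` carrier G" using x0G by blast
  qed
  have "\<phi> \<in> iso G P" using group_hom.iso_iff[OF gh] surj ker by blast
  then have "G \<cong> P" unfolding is_iso_def by blast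
  moreover have "\<forall>i<a. comm_group (Gs i) \<and> card (carrier (Gs i)) \<ge> 4"
    using cgGs cardS unfolding I_def by simp
  ultimately show ?thesis unfolding P_def I_def by blast
qed

end

lemma primes_exist: "\<exists>ps :: nat \<Rightarrow> nat. (\<forall>i<a. prime (ps i) \<and> 5 \<le> ps i) \<and> inj_on ps {..<a}"
proof (induction a)
  case 0 then show ?case by simp
next
  case (Suc a)
  then obtain ps :: "nat \<Rightarrow> nat" where ps: "\<forall>i<a. prime (ps i) \<and> 5 \<le> ps i" "inj_on ps {..<a}" by blast
  obtain p :: nat where p: "prime p" "p > (\<Sum>i<a. ps i) + 5" using bigger_prime by blast
  have big: "ps i < p" if "i < a" for i
  proof -
    have "ps i \<le> (\<Sum>i<a. ps i)" using that by (intro member_le_sum) auto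
    then show ?thesis using p by simp
  qed
  define ps' where "ps' = ps(a := p)"
  have "\<forall>i<Suc a. prime (ps' i) \<and> 5 \<le> ps' i" using ps p unfolding ps'_def by (auto simp: less_Suc_eq)
  moreover have "inj_on ps' {..<Suc a}"
    unfolding inj_on_def ps'_def
  proof (intro ballI impI)
    fix i j assume ij: "i \<in> {..<Suc a}" "j \<in> {..<Suc a}" "(ps(a := p)) i = (ps(a := p)) j"
    show "i = j"
    proof (cases "i = a"; cases "j = a")
      assume "i = a" "j \<noteq> a" then show ?thesis using ij big[of j] by auto
    next
      assume "i \<noteq> a" "j = a" then show ?thesis using ij big[of i] by auto
    next
      assume "i \<noteq> a" "j \<noteq> a" then show ?thesis using ij ps(2) unfolding inj_on_def by auto
    qed simp
  qed
  ultimately show ?case by blast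
qed

lemma decomposable_exists: "\<exists>k>0. decomposable_order a k"
proof -
  obtain ps :: "nat \<Rightarrow> nat" where ps: "\<forall>i<a. prime (ps i) \<and> 5 \<le> ps i" "inj_on ps {..<a}" using primes_exist by blast
  define k where "k = (\<Prod>i<a. ps i)"
  have "k > 0" unfolding k_def using ps(1) by (simp add: prime_gt_0_nat)
  moreover have "decomposable_order a k"
    unfolding decomposable_order_def
  proof (intro allI impI)
    fix G :: "nat monoid"
    assume G: "comm_group G \<and> finite (carrier G) \<and> card (carrier G) = k"
    show "\<exists>Gs :: nat \<Rightarrow> nat monoid. (\<forall>i<a. comm_group (Gs i) \<and> card (carrier (Gs i)) \<ge> 4) \<and>
               G \<cong> product_group {..<a} Gs"
      using comm_group.decomp[of G a ps] G ps unfolding k_def by blast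
  qed
  ultimately show ?thesis by blast
qed

lemma hom_finprod_gen:
  assumes h: "h \<in> hom G K" and G: "comm_group G" and K: "comm_group K"
    and A: "finite A" and f: "f \<in> A \<rightarrow> carrier G"
  shows "h (finprod G f A) = finprod K (\<lambda>x. h (f x)) A"
  using A f
proof (induction A rule: finite_induct)
  case empty
  have "h \<one>\<^bsub>G\<^esub> = \<one>\<^bsub>K\<^esub>"
    using h G K by (simp add: comm_group_def hom_one)
  then show ?case by (simp add: comm_monoid.finprod_empty[OF comm_group.axioms(1)[OF G]]
        comm_monoid.finprod_empty[OF comm_group.axioms(1)[OF K]])
next
  case (insert b A)
  interpret G: comm_group G by (rule G)
  interpret K: comm_group K by (rule K)
  have fb: "f b \<in> carrier G" and fA: "f \<in> A \<rightarrow> carrier G" using insert.prems by auto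
  have hfA: "(\<lambda>x. h (f x)) \<in> A \<rightarrow> carrier K" using fA h by (auto simp: hom_def)
  have hfb: "h (f b) \<in> carrier K" using fb h by (auto simp: hom_def)
  have "finprod G f (insert b A) = f b \<otimes>\<^bsub>G\<^esub> finprod G f A"
    using insert fb fA by (intro G.finprod_insert) auto
  then have "h (finprod G f (insert b A)) = h (f b) \<otimes>\<^bsub>K\<^esub> h (finprod G f A)"
    using h fb fA by (simp add: hom_mult)
  also have "\<dots> = h (f b) \<otimes>\<^bsub>K\<^esub> finprod K (\<lambda>x. h (f x)) A" using insert.IH[OF fA] by simp
  also have "\<dots> = finprod K (\<lambda>x. h (f x)) (insert b A)"
    using insert hfb hfA by (intro K.finprod_insert[symmetric]) auto
  finally show ?case .
qed

lemma forest_small: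
  assumes "F \<subseteq> {e}" shows "forest_edges F"
  unfolding forest_edges_def
proof
  assume "\<exists>vs. is_cycle F vs"
  then obtain vs where c: "is_cycle F vs" by blast
  then have l: "length vs \<ge> 3" and d: "distinct vs"
    and ed: "\<And>i. i < length vs \<Longrightarrow> {vs ! i, vs ! ((i + 1) mod length vs)} \<in> F"
    unfolding is_cycle_def by auto
  have l0: "0 < length vs" "1 < length vs" using l by linarith+
  have "(0 + 1) mod length vs = 1" "(1 + 1) mod length vs = 2" using l by auto
  then have "{vs ! 0, vs ! 1} \<in> F" "{vs ! 1, vs ! 2} \<in> F" using ed[OF l0(1)] ed[OF l0(2)] by simp_all
  then have eq: "{vs ! 0, vs ! 1} = {vs ! 1, vs ! 2}" using assms by blast
  have "vs ! 0 \<noteq> vs ! 1" "vs ! 0 \<noteq> vs ! 2" "vs ! 1 \<noteq> vs ! 2"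
    using d l0 l by (simp_all add: nth_eq_iff_index_eq)
  with eq show False by (auto simp: doubleton_eq_iff)
qed

lemma arboricity_coloring:
  assumes fin: "finite E"
  shows "\<exists>c. (\<forall>e\<in>E. c e < arboricity E) \<and> (\<forall>i<arboricity E. forest_edges {e \<in> E. c e = i})"
proof -
  let ?P = "\<lambda>n. \<exists>c :: 'a set \<Rightarrow> nat. (\<forall>e\<in>E. c e < n) \<and> (\<forall>i<n. forest_edges {e \<in> E. c e = i})"
  obtain f where f: "bij_betw f E {0..<card E}" using ex_bij_betw_finite_nat[OF fin] by blast
  have "?P (card E)"
  proof (intro exI[of _ f] conjI ballI allI impI)
    fix e assume "e \<in> E" then show "f e < card E" using f by (auto simp: bij_betw_def)
  next
    fix i assume "i < card E"
    show "forest_edges {e \<in> E. f e = i}"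
    proof (cases "\<exists>e0\<in>E. f e0 = i")
      case True
      then obtain e0 where e0: "e0 \<in> E" "f e0 = i" by blast
      have "{e \<in> E. f e = i} \<subseteq> {e0}" using f e0 by (auto simp: bij_betw_def inj_on_def)
      then show ?thesis by (rule forest_small)
    next
      case False
      then have "{e \<in> E. f e = i} \<subseteq> {undefined}" by auto
      then show ?thesis by (rule forest_small)
    qed
  qed
  then have "?P (arboricity E)" unfolding arboricity_def by (rule LeastI)
  then show ?thesis by blast
qed

theorem corollary6:
  fixes V :: "'v set" and E :: "'v set set" and a :: nat
  assumes "simple_graph V E"
    and "0 < a"
    and "arboricity E \<le> a"
    and "\<not> has_isolated_edge E"
  shows "(\<exists>k>0. group_sum_prop E k) \<and> chi_sigma_g_star E \<le> k_of a"
proof -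
  have finV: "finite V" and Eedge: "\<And>e. e \<in> E \<Longrightarrow> \<exists>u v. u \<in> V \<and> v \<in> V \<and> u \<noteq> v \<and> e = {u, v}"
    using assms(1) unfolding simple_graph_def by auto
  have EPow: "E \<subseteq> Pow V" using Eedge by blast
  have finE: "finite E" using finite_subset[OF EPow] finV by simp
  have twE: "twosets E" unfolding twosets_def using Eedge by blast
  have nbrsV: "nbrs E v \<subseteq> V" for v unfolding nbrs_def using EPow by blast
  have finN: "finite (nbrs E v)" for v using finite_subset[OF nbrsV finV] .
  obtain c where c: "\<forall>e\<in>E. c e < arboricity E" "\<forall>i<arboricity E. forest_edges {e \<in> E. c e = i}"
    using arboricity_coloring[OF finE] by blast
  have ca: "c e < a" if "e \<in> E" for e using c(1) that assms(3) by fastforce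
  have Fi: "forest_edges {e \<in> E. c e = i}" if "i < a" for i
  proof (cases "i < arboricity E")
    case True then show ?thesis using c(2) by blast
  next
    case False
    then have "{e \<in> E. c e = i} \<subseteq> {undefined}" using c(1) by fastforce
    then show ?thesis by (rule forest_small)
  qed
  have "\<forall>i. \<exists>H. i < a \<longrightarrow> {e \<in> E. c e = i} \<subseteq> H \<and> H \<subseteq> E \<and> forest_edges H \<and> \<not> has_isolated_edge H"
  proof
    fix i show "\<exists>H. i < a \<longrightarrow> {e \<in> E. c e = i} \<subseteq> H \<and> H \<subseteq> E \<and> forest_edges H \<and> \<not> has_isolated_edge H"
    proof (cases "i < a")
      case True
      have "{e \<in> E. c e = i} \<subseteq> E" by blast
      from extend_forest[OF finE twE assms(4) this Fi[OF True]] show ?thesis by blast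
    qed simp
  qed
  then obtain Hf where Hf: "\<And>i. i < a \<Longrightarrow> {e \<in> E. c e = i} \<subseteq> Hf i \<and> Hf i \<subseteq> E \<and> forest_edges (Hf i) \<and> \<not> has_isolated_edge (Hf i)"
    by metis
  have HfE: "Hf i \<subseteq> E" if "i < a" for i using Hf[OF that] by blast
  have Hfin: "finite (Hf i)" if "i < a" for i using finite_subset[OF HfE[OF that] finE] .
  have Htw: "twosets (Hf i)" if "i < a" for i using twosets_subset[OF twE HfE[OF that]] .
  have Hfo: "forest_edges (Hf i)" if "i < a" for i using Hf[OF that] by blast
  have Hni: "\<not> has_isolated_edge (Hf i)" if "i < a" for i using Hf[OF that] by blast
  have Hc: "e \<in> Hf (c e)" if "e \<in> E" for e using Hf[OF ca[OF that]] that by blast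
  define k0 where "k0 = k_of a"
  have k0: "0 < k0 \<and> decomposable_order a k0"
    unfolding k0_def k_of_def using decomposable_exists[of a] by (rule LeastI_ex)
  have gsp: "group_sum_prop E k0"
    unfolding group_sum_prop_def
  proof (intro allI impI)
    fix G :: "nat monoid"
    assume G: "comm_group G \<and> finite (carrier G) \<and> card (carrier G) = k0"
    then have cgG: "comm_group G" by blast
    interpret G: comm_group G by (rule cgG)
    obtain Gs :: "nat \<Rightarrow> nat monoid" where Gs: "\<forall>i<a. comm_group (Gs i) \<and> card (carrier (Gs i)) \<ge> 4"
      and iso: "G \<cong> product_group {..<a} Gs"
      using k0 G unfolding decomposable_order_def by blast
    define P where "P = product_group {..<a} Gs"
    obtain \<phi> where \<phi>: "\<phi> \<in> iso G P" using iso unfolding is_iso_def P_def by blast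
    have \<phi>hom: "\<phi> \<in> hom G P" and \<phi>bij: "bij_betw \<phi> (carrier G) (carrier P)"
      using \<phi> unfolding iso_def by auto
    have cgGs: "comm_group (Gs i)" if "i < a" for i using Gs that by blast
    have finGs: "finite (carrier (Gs i))" if "i < a" for i
    proof (rule ccontr)
      assume "infinite (carrier (Gs i))"
      then have "card (carrier (Gs i)) = 0" by simp
      with Gs that show False by fastforce
    qed
    have grpP: "group P" unfolding P_def
    proof (rule product_group)
      fix i assume "i \<in> {..<a}"
      then show "group (Gs i)" using cgGs comm_group.axioms(2) by auto
    qed
    have c4: "card (carrier (Gs i)) \<ge> 4" if "i < a" for i using Gs that by blast
    have "\<forall>i. \<exists>h. i < a \<longrightarrow> (\<forall>e\<in>Hf i. h e \<in> carrier (Gs i) - {\<one>\<^bsub>Gs i\<^esub>}) \<and>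
        (\<forall>u v. {u, v} \<in> Hf i \<and> \<not> (nbrs (Hf i) u = {v} \<and> nbrs (Hf i) v = {u}) \<longrightarrow>
              weight (Gs i) (Hf i) h u \<noteq> weight (Gs i) (Hf i) h v)"
    proof
      fix i show "\<exists>h. i < a \<longrightarrow> (\<forall>e\<in>Hf i. h e \<in> carrier (Gs i) - {\<one>\<^bsub>Gs i\<^esub>}) \<and>
        (\<forall>u v. {u, v} \<in> Hf i \<and> \<not> (nbrs (Hf i) u = {v} \<and> nbrs (Hf i) v = {u}) \<longrightarrow>
              weight (Gs i) (Hf i) h u \<noteq> weight (Gs i) (Hf i) h v)"
      proof (cases "i < a")
        case True
        from comm_group.forest_label[OF cgGs[OF True] finGs[OF True] c4[OF True] Hfin[OF True] Htw[OF True] Hfo[OF True]]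
        show ?thesis by blast
      qed simp
    qed
    then obtain hf where hfc: "\<And>i e. i < a \<Longrightarrow> e \<in> Hf i \<Longrightarrow> hf i e \<in> carrier (Gs i) - {\<one>\<^bsub>Gs i\<^esub>}"
      and hfw: "\<And>i u v. i < a \<Longrightarrow> {u, v} \<in> Hf i \<Longrightarrow> \<not> (nbrs (Hf i) u = {v} \<and> nbrs (Hf i) v = {u}) \<Longrightarrow>
              weight (Gs i) (Hf i) (hf i) u \<noteq> weight (Gs i) (Hf i) (hf i) v"
      by metis
    define t where "t e = (\<lambda>i\<in>{..<a}. if e \<in> Hf i then hf i e else \<one>\<^bsub>Gs i\<^esub>)" for e
    have tP: "t e \<in> carrier P" for e
    proof -
      have "(if e \<in> Hf i then hf i e else \<one>\<^bsub>Gs i\<^esub>) \<in> carrier (Gs i)" if "i < a" for i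
        using hfc[OF that] monoid.one_closed[OF group.is_monoid[OF comm_group.axioms(2)[OF cgGs[OF that]]]]
        by auto
      then show ?thesis unfolding P_def t_def by auto
    qed
    define f where "f e = inv_into (carrier G) \<phi> (t e)" for e
    have fG: "f e \<in> carrier G" for e
      unfolding f_def using \<phi>bij tP by (metis bij_betw_def inv_into_into)
    have \<phi>f: "\<phi> (f e) = t e" for e
      unfolding f_def using \<phi>bij tP by (metis bij_betw_def f_inv_into_f)
    define \<pi> where "\<pi> i x = \<phi> x i" for i x
    have \<pi>hom: "\<pi> i \<in> hom G (Gs i)" if ia: "i < a" for i
    proof (rule homI)
      fix x assume "x \<in> carrier G"
      then have "\<phi> x \<in> carrier P" using \<phi>hom by (simp add: hom_in_carrier)
      then show "\<pi> i x \<in> carrier (Gs i)" unfolding \<pi>_def P_def using ia by auto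
    next
      fix x y assume xy: "x \<in> carrier G" "y \<in> carrier G"
      have "\<phi> (x \<otimes>\<^bsub>G\<^esub> y) = \<phi> x \<otimes>\<^bsub>P\<^esub> \<phi> y" using \<phi>hom xy by (simp add: hom_mult)
      then show "\<pi> i (x \<otimes>\<^bsub>G\<^esub> y) = \<pi> i x \<otimes>\<^bsub>Gs i\<^esub> \<pi> i y" unfolding \<pi>_def P_def using ia by simp
    qed
    have fun_f: "(\<lambda>u. f {u, v}) \<in> nbrs E v \<rightarrow> carrier G" for v using fG by simp
    have proj: "\<pi> i (weight G E f v) = weight (Gs i) (Hf i) (hf i) v" if ia: "i < a" for i v
    proof -
      interpret Gi: comm_group "Gs i" by (rule cgGs[OF ia])
      have "\<pi> i (weight G E f v) = finprod (Gs i) (\<lambda>u. \<pi> i (f {u, v})) (nbrs E v)"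
        unfolding weight_def using hom_finprod_gen[OF \<pi>hom[OF ia] cgG cgGs[OF ia] finN fun_f] .
      also have "\<dots> = finprod (Gs i) (\<lambda>u. hf i {u, v}) (nbrs (Hf i) v)"
      proof (rule Gi.finprod_mono_neutral_cong_right)
        show "finite (nbrs E v)" by (rule finN)
        show "nbrs (Hf i) v \<subseteq> nbrs E v" using HfE[OF ia] unfolding nbrs_def by blast
        show "\<pi> i (f {u, v}) = \<one>\<^bsub>Gs i\<^esub>" if "u \<in> nbrs E v - nbrs (Hf i) v" for u
        proof -
          have "{u, v} \<notin> Hf i" using that unfolding nbrs_def by blast
          then show ?thesis unfolding \<pi>_def \<phi>f t_def using ia by simp
        qed
        show "\<pi> i (f {u, v}) = hf i {u, v}" if "u \<in> nbrs (Hf i) v" for u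
        proof -
          have "{u, v} \<in> Hf i" using that unfolding nbrs_def by blast
          then show ?thesis unfolding \<pi>_def \<phi>f t_def using ia by simp
        qed
        show "(\<lambda>u. \<pi> i (f {u, v})) \<in> nbrs E v \<rightarrow> carrier (Gs i)"
          using \<pi>hom[OF ia] fG by (auto simp: hom_in_carrier)
      qed
      finally show ?thesis unfolding weight_def .
    qed
    have "good_labelling G E f"
      unfolding good_labelling_def
    proof (intro conjI ballI allI impI)
      fix e assume eE: "e \<in> E"
      have ia: "c e < a" using ca[OF eE] .
      have ne: "t e (c e) \<noteq> \<one>\<^bsub>Gs (c e)\<^esub>" using hfc[OF ia Hc[OF eE]] Hc[OF eE] ia unfolding t_def by simp
      have "f e \<noteq> \<one>\<^bsub>G\<^esub>"
      proof
        assume "f e = \<one>\<^bsub>G\<^esub>"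
        then have "\<phi> (f e) = \<one>\<^bsub>P\<^esub>"
          using \<phi>hom G.is_group grpP by (simp add: hom_one)
        then have "t e (c e) = \<one>\<^bsub>Gs (c e)\<^esub>" using \<phi>f ia unfolding P_def by simp
        with ne show False by simp
      qed
      then show "f e \<in> carrier G - {\<one>\<^bsub>G\<^esub>}" using fG by simp
    next
      fix u v assume uv: "{u, v} \<in> E"
      define i where "i = c {u, v}"
      have ia: "i < a" unfolding i_def using ca[OF uv] .
      have uvH: "{u, v} \<in> Hf i" unfolding i_def using Hc[OF uv] .
      have "\<not> (nbrs (Hf i) u = {v} \<and> nbrs (Hf i) v = {u})"
        using Hni[OF ia] uvH unfolding has_isolated_edge_def by blast
      then have "weight (Gs i) (Hf i) (hf i) u \<noteq> weight (Gs i) (Hf i) (hf i) v"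
        using hfw[OF ia uvH] by blast
      then show "weight G E f u \<noteq> weight G E f v" using proj[OF ia, of u] proj[OF ia, of v] by metis
    qed
    then show "\<exists>f. good_labelling G E f" by blast
  qed
  have "chi_sigma_g_star E \<le> k0"
    unfolding chi_sigma_g_star_def using k0 gsp by (intro Least_le) simp
  then show ?thesis using k0 gsp unfolding k0_def by blast
qed

end
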